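(* Let $F$ be a smooth symmetric 2-cotensor on the unit sphere $\mathbb{S}^{n-1}\subset\mathbb{R}^n$, and write $F(x,V,V)$ for its value at $x\in\mathbb{S}^{n-1}$ on $V\in T_x\mathbb{S}^{n-1}$. Suppose there is $k\in\mathbb{N}$ such that for every unit speed great-circle geodesic $\gamma$ of $\mathbb{S}^{n-1}$, $$I_k(F,\gamma)=\int_0^\pi F(\gamma(t),\gamma'(t),\gamma'(t))(\sin t)^k\,dt=0.$$ Then (i) $F$ has the parity of $k$: for every such $\gamma$ and all $t$, $F(\gamma(t),\gamma'(t),\gamma'(t))=(-1)^kF(\gamma(t+\pi),\gamma'(t+\pi),\gamma'(t+\pi))$; (ii) for every such $\gamma$ and every polynomial $p$ on $\mathbb{R}^n$ of degree at most $k$, $$\int_0^{2\pi}p(\gamma(t))\,F(\gamma(t),\gamma'(t),\gamma'(t))\,dt=0.$$ *)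

theory Defs
  imports "HOL-Analysis.Analysis"
begin

coinductive smooth_fun :: "(real^'n \<Rightarrow> real) \<Rightarrow> bool" where
  "(\<And>x. f differentiable (at x)) \<Longrightarrow>
   (\<And>i. smooth_fun (\<lambda>x. frechet_derivative f (at x) (axis i 1))) \<Longrightarrow>
   smooth_fun f"

definition smooth_sym_cotensor_sphere :: "(real^'n \<Rightarrow> real^'n \<Rightarrow> real^'n \<Rightarrow> real) \<Rightarrow> bool" where
  "smooth_sym_cotensor_sphere F \<longleftrightarrow>
     (\<exists>f :: 'n \<Rightarrow> 'n \<Rightarrow> real^'n \<Rightarrow> real.
        (\<forall>i j. smooth_fun (f i j)) \<and> (\<forall>i j. f i j = f j i) \<and>
        (\<forall>x \<in> sphere 0 1. \<forall>u v. u \<bullet> x = 0 \<longrightarrow> v \<bullet> x = 0 \<longrightarrow>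
            F x u v = (\<Sum>i\<in>UNIV. \<Sum>j\<in>UNIV. f i j x * u$i * v$j)))"

definition geod :: "real^'n \<Rightarrow> real^'n \<Rightarrow> real \<Rightarrow> real^'n" where
  "geod u v t = cos t *\<^sub>R u + sin t *\<^sub>R v"

definition geod' :: "real^'n \<Rightarrow> real^'n \<Rightarrow> real \<Rightarrow> real^'n" where
  "geod' u v t = (- sin t) *\<^sub>R u + cos t *\<^sub>R v"

definition orthonormal2 :: "real^'n \<Rightarrow> real^'n \<Rightarrow> bool" where
  "orthonormal2 u v \<longleftrightarrow> norm u = 1 \<and> norm v = 1 \<and> u \<bullet> v = 0"

definition poly_fun_deg :: "nat \<Rightarrow> (real^'n \<Rightarrow> real) \<Rightarrow> bool" where
  "poly_fun_deg k p \<longleftrightarrow>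
     (\<exists>c :: ('n \<Rightarrow> nat) \<Rightarrow> real.
        p = (\<lambda>x. \<Sum>\<alpha>\<in>{\<alpha> :: 'n \<Rightarrow> nat. sum \<alpha> UNIV \<le> k}. c \<alpha> * (\<Prod>i\<in>UNIV. (x$i) ^ \<alpha> i)))"

end

theory Submission
  imports Defs
begin

definition C1 :: "(real \<Rightarrow> real) \<Rightarrow> bool" where
  "C1 h \<longleftrightarrow> (\<exists>h'. (\<forall>t. (h has_real_derivative h' t) (at t)) \<and> continuous_on UNIV h')"

lemma C1_cont: "C1 h \<Longrightarrow> continuous_on UNIV h"
  unfolding C1_def by (meson DERIV_continuous continuous_at_imp_continuous_on)

lemma C1_const: "C1 (\<lambda>t. c)"
  unfolding C1_def by (rule exI[of _ "\<lambda>t. 0"]) auto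

lemma C1_sin: "C1 sin"
  unfolding C1_def by (rule exI[of _ cos]) (auto intro!: derivative_eq_intros continuous_intros)

lemma C1_cos: "C1 cos"
  unfolding C1_def by (rule exI[of _ "\<lambda>t. - sin t"]) (auto intro!: derivative_eq_intros continuous_intros)

lemma C1_add: assumes "C1 f" "C1 g" shows "C1 (\<lambda>t. f t + g t)"
proof -
  obtain f' g' where f: "\<And>t. (f has_real_derivative f' t) (at t)" "continuous_on UNIV f'"
    and g: "\<And>t. (g has_real_derivative g' t) (at t)" "continuous_on UNIV g'"
    using assms unfolding C1_def by blast
  show ?thesis unfolding C1_def
    by (rule exI[of _ "\<lambda>t. f' t + g' t"]) (auto intro!: derivative_eq_intros continuous_intros f g)
qed

lemma C1_mult: assumes "C1 f" "C1 g" shows "C1 (\<lambda>t. f t * g t)"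
proof -
  obtain f' g' where f: "\<And>t. (f has_real_derivative f' t) (at t)" "continuous_on UNIV f'"
    and g: "\<And>t. (g has_real_derivative g' t) (at t)" "continuous_on UNIV g'"
    using assms unfolding C1_def by blast
  have cf: "continuous_on UNIV f" "continuous_on UNIV g" using assms C1_cont by auto
  show ?thesis unfolding C1_def
    by (rule exI[of _ "\<lambda>t. f' t * g t + f t * g' t"]) (auto intro!: derivative_eq_intros continuous_intros f g cf)
qed

lemma C1_shift: assumes "C1 f" shows "C1 (\<lambda>t. f (t + c))"
proof -
  obtain f' where f: "\<And>t. (f has_real_derivative f' t) (at t)" "continuous_on UNIV f'"
    using assms unfolding C1_def by blast
  have "((\<lambda>t. f (t + c)) has_real_derivative f' (t + c)) (at t)" for t
  proof -
    have "((\<lambda>t. t + c) has_real_derivative 1) (at t)" by (auto intro!: derivative_eq_intros)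
    from DERIV_chain2[OF f(1) this] show ?thesis by simp
  qed
  moreover have "continuous_on UNIV (\<lambda>t. f' (t + c))"
    by (rule continuous_on_compose2[OF f(2)]) (auto intro!: continuous_intros)
  ultimately show ?thesis unfolding C1_def by (intro exI[of _ "\<lambda>t. f' (t + c)"]) blast
qed

lemma C1_pow: assumes "C1 f" shows "C1 (\<lambda>t. f t ^ n)"
  by (induction n) (auto intro: C1_const C1_mult[OF assms])

lemma C1_sum: assumes "\<And>i. i \<in> I \<Longrightarrow> C1 (f i)" shows "C1 (\<lambda>t. \<Sum>i\<in>I. f i t)"
proof (cases "finite I")
  case True then show ?thesis using assms
    by (induction I rule: finite_induct) (auto intro: C1_const C1_add)
qed (simp add: C1_const)

lemma G_deriv:
  fixes \<phi> \<phi>' w w' :: "real \<Rightarrow> real"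
  assumes d\<phi>: "\<And>t. (\<phi> has_real_derivative \<phi>' t) (at t)" and c\<phi>': "continuous_on UNIV \<phi>'"
    and dw: "\<And>t. (w has_real_derivative w' t) (at t)" and cw': "continuous_on UNIV w'" and b: "0 \<le> b"
  shows "((\<lambda>s. integral {0..b} (\<lambda>t. \<phi> (t+s) * w t)) has_real_derivative
     (\<phi> (s+b) * w b - \<phi> s * w 0 - integral {0..b} (\<lambda>t. \<phi> (t+s) * w' t))) (at s)"
proof -
  have c\<phi>: "continuous_on UNIV \<phi>" using d\<phi> by (meson DERIV_continuous continuous_at_imp_continuous_on)
  have cw: "continuous_on UNIV w" using dw by (meson DERIV_continuous continuous_at_imp_continuous_on)
  have ds: "((\<lambda>x. \<phi> (t + x)) has_real_derivative \<phi>' (t + x)) (at x)" for t x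
  proof -
    have "((\<lambda>x. t + x) has_real_derivative 1) (at x)" by (auto intro!: derivative_eq_intros)
    from DERIV_chain2[OF d\<phi> this] show ?thesis by simp
  qed
  have dt: "((\<lambda>x. \<phi> (x + s)) has_real_derivative \<phi>' (x + s)) (at x)" for x
  proof -
    have "((\<lambda>x. x + s) has_real_derivative 1) (at x)" by (auto intro!: derivative_eq_intros)
    from DERIV_chain2[OF d\<phi> this] show ?thesis by simp
  qed
  note [continuous_intros] = continuous_on_compose2[OF c\<phi>] continuous_on_compose2[OF c\<phi>']
     continuous_on_compose2[OF cw] continuous_on_compose2[OF cw']
  have L: "((\<lambda>s. integral (cbox 0 b) (\<lambda>t. \<phi> (t+s) * w t)) has_real_derivative
       integral (cbox 0 b) (\<lambda>t. \<phi>' (t+s) * w t)) (at s within UNIV)"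
  proof (rule leibniz_rule_field_derivative[of UNIV 0 b "\<lambda>s t. \<phi> (t+s) * w t" "\<lambda>s t. \<phi>' (t+s) * w t" s])
    fix x t :: real
    show "((\<lambda>x. \<phi> (t + x) * w t) has_real_derivative \<phi>' (t + x) * w t) (at x within UNIV)"
      using ds[of t x] by (auto intro!: derivative_eq_intros simp: add.commute)
  next
    fix x :: real
    show "(\<lambda>t. \<phi> (t + x) * w t) integrable_on cbox 0 b"
      by (rule integrable_continuous) (auto intro!: continuous_intros)
  next
    show "continuous_on (UNIV \<times> cbox 0 b) (\<lambda>(x, t). \<phi>' (t + x) * w t)"
      by (auto simp: case_prod_unfold intro!: continuous_intros)
  qed auto
  have F: "((\<lambda>t. \<phi>' (t+s) * w t + w' t * \<phi> (t+s)) has_integral (\<phi> (b+s) * w b - \<phi> (0+s) * w 0)) {0..b}"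
  proof (rule fundamental_theorem_of_calculus)
    show "0 \<le> b" by (rule b)
    fix x assume "x \<in> {0..b}"
    have "((\<lambda>t. \<phi> (t+s) * w t) has_real_derivative (\<phi>' (x+s) * w x + w' x * \<phi> (x+s))) (at x)"
      by (rule DERIV_mult[OF dt dw])
    then show "((\<lambda>t. \<phi> (t+s) * w t) has_vector_derivative (\<phi>' (x+s) * w x + w' x * \<phi> (x+s))) (at x within {0..b})"
      by (simp add: has_real_derivative_iff_has_vector_derivative[symmetric] has_field_derivative_at_within)
  qed
  have i1: "(\<lambda>t. \<phi>' (t+s) * w t) integrable_on {0..b}" "(\<lambda>t. w' t * \<phi> (t+s)) integrable_on {0..b}"
    by (auto intro!: integrable_continuous_interval continuous_intros)
  have e: "(\<lambda>t. \<phi> (t+s) * w' t) = (\<lambda>t. w' t * \<phi> (t+s))" by (simp add: mult.commute)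
  have "integral {0..b} (\<lambda>t. \<phi>' (t+s) * w t) = \<phi> (s+b) * w b - \<phi> s * w 0 - integral {0..b} (\<lambda>t. \<phi> (t+s) * w' t)"
    unfolding e using integral_add[OF i1] integral_unique[OF F] by (simp add: add.commute)
  then show ?thesis using L by simp
qed

lemma aux_alg: fixes c s X J :: real assumes "c * c + s * s = 1"
  shows "(1 + J) * (X * c) * c + - s * (s * X) = (1 + J) * X - (1 + (1 + J)) * (s * (s * X))"
proof -
  have "c * c = 1 - s * s" using assms by simp
  then have "(1 + J) * (X * c) * c = (1 + J) * X * (1 - s * s)" by (metis mult.assoc)
  then show ?thesis by (simp add: algebra_simps)
qed

lemma d_sinpow: "((\<lambda>t. sin t ^ Suc n) has_real_derivative real (Suc n) * (sin t ^ n * cos t)) (at t)"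
proof (induction n)
  case 0 then show ?case by (auto intro!: derivative_eq_intros)
next
  case (Suc n)
  have "((\<lambda>t. sin t * sin t ^ Suc n) has_real_derivative
     cos t * sin t ^ Suc n + real (Suc n) * (sin t ^ n * cos t) * sin t) (at t)"
    by (rule DERIV_mult[OF DERIV_sin Suc])
  then show ?case by (simp add: algebra_simps)
qed

lemma G_zero:
  fixes \<phi> \<phi>' w w' :: "real \<Rightarrow> real"
  assumes d\<phi>: "\<And>t. (\<phi> has_real_derivative \<phi>' t) (at t)" and c\<phi>': "continuous_on UNIV \<phi>'"
    and dw: "\<And>t. (w has_real_derivative w' t) (at t)" and cw': "continuous_on UNIV w'" and b: "0 \<le> b"
    and z: "\<And>s. integral {0..b} (\<lambda>t. \<phi> (t+s) * w t) = 0"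
  shows "\<phi> (s+b) * w b - \<phi> s * w 0 - integral {0..b} (\<lambda>t. \<phi> (t+s) * w' t) = 0"
proof -
  have "((\<lambda>s. integral {0..b} (\<lambda>t. \<phi> (t+s) * w t)) has_real_derivative
     (\<phi> (s+b) * w b - \<phi> s * w 0 - integral {0..b} (\<lambda>t. \<phi> (t+s) * w' t))) (at s)"
    by (rule G_deriv[OF d\<phi> c\<phi>' dw cw' b])
  then have "((\<lambda>s. 0) has_real_derivative
     (\<phi> (s+b) * w b - \<phi> s * w 0 - integral {0..b} (\<lambda>t. \<phi> (t+s) * w' t))) (at s)"
    using z by simp
  then show ?thesis using DERIV_const DERIV_unique by blast
qed

lemma shift_period:
  fixes h :: "real \<Rightarrow> real"
  assumes "C1 h" and per: "\<And>t. h (t + 2*pi) = h t"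
  shows "integral {0..2*pi} (\<lambda>t. h (t+s)) = integral {0..2*pi} h"
proof -
  obtain h' where d: "\<And>t. (h has_real_derivative h' t) (at t)" "continuous_on UNIV h'"
    using assms unfolding C1_def by blast
  have D: "((\<lambda>s. integral {0..2*pi} (\<lambda>t. h (t+s) * 1)) has_real_derivative
     (h (s+2*pi) * 1 - h s * 1 - integral {0..2*pi} (\<lambda>t. h (t+s) * 0))) (at s)" for s
    by (rule G_deriv[OF d]) (auto intro!: derivative_eq_intros continuous_intros)
  have "((\<lambda>s. integral {0..2*pi} (\<lambda>t. h (t+s))) has_real_derivative 0) (at s)" for s
    using D[of s] per[of s] by simp
  then have "\<forall>s. ((\<lambda>s. integral {0..2*pi} (\<lambda>t. h (t+s))) has_real_derivative 0) (at s)" by blast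
  from DERIV_isconst_all[OF this, of s 0] show ?thesis by simp
qed

lemma split_period:
  fixes h :: "real \<Rightarrow> real"
  assumes "continuous_on UNIV h"
  shows "integral {0..2*pi} h = integral {0..pi} h + integral {0..pi} (\<lambda>t. h (t+pi))"
proof -
  have "integral {0..pi} h + integral {pi..2*pi} h = integral {0..2*pi} h"
    by (rule Henstock_Kurzweil_Integration.integral_combine) (auto intro!: integrable_continuous_interval continuous_on_subset[OF assms])
  moreover have "integral {pi-pi..2*pi-pi} (\<lambda>t. h (t+pi)) = integral {pi..2*pi} h"
    by (rule integral_shift_real_ivl)
  ultimately show ?thesis by simp
qed

lemma hom_circle_zero:
  fixes c :: "nat \<Rightarrow> real"
  assumes Z: "\<And>s. (\<Sum>j\<le>m. c j * cos s ^ j * (- sin s) ^ (m - j)) = 0" and j: "j \<le> m"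
  shows "c j = 0"
proof -
  have "\<forall>x. (\<Sum>j\<le>m. c j * x ^ j) = 0"
  proof
    fix x :: real
    define r where "r = sqrt (x^2 + 1)"
    have r: "r > 0" "r^2 = x^2 + 1" unfolding r_def by (auto intro: add_nonneg_pos)
    have nz: "1 + x^2 \<noteq> 0" by (smt (verit) zero_le_power2)
    have "(x / r)^2 + (- 1 / r)^2 = 1" using r nz by (simp add: power_divide field_simps)
    then obtain s where s: "x / r = cos s" "- 1 / r = sin s" by (rule sincos_total_2pi)
    have "0 = (\<Sum>j\<le>m. c j * cos s ^ j * (- sin s) ^ (m - j))" using Z by simp
    also have "\<dots> = (\<Sum>j\<le>m. c j * x ^ j / r ^ m)"
    proof (rule sum.cong)
      fix j assume "j \<in> {..m}"
      then have "r ^ m = r ^ j * r ^ (m - j)" by (simp add: power_add[symmetric])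
      have cs: "cos s = x / r" "- sin s = 1 / r" using s by auto
      have "c j * cos s ^ j * (- sin s) ^ (m - j) = c j * (x ^ j / r ^ j) * (1 / r ^ (m - j))"
        unfolding cs by (simp add: power_divide)
      also have "\<dots> = c j * x ^ j / r ^ m" using \<open>r ^ m = r ^ j * r ^ (m - j)\<close> r by simp
      finally show "c j * cos s ^ j * (- sin s) ^ (m - j) = c j * x ^ j / r ^ m" .
    qed simp
    also have "\<dots> = (\<Sum>j\<le>m. c j * x ^ j) / r ^ m" by (simp add: sum_divide_distrib)
    finally show "(\<Sum>j\<le>m. c j * x ^ j) = 0" using r by simp
  qed
  then show ?thesis using polyfun_eq_0[of c m] j by blast
qed

locale perf =
  fixes \<phi> \<phi>' :: "real \<Rightarrow> real" and k :: nat
  assumes d\<phi>: "\<And>t. (\<phi> has_real_derivative \<phi>' t) (at t)" and c\<phi>': "continuous_on UNIV \<phi>'"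
    and per: "\<And>t. \<phi> (t + 2*pi) = \<phi> t"
    and hyp: "\<And>s. integral {0..pi} (\<lambda>t. \<phi> (t+s) * sin t ^ k) = 0"
begin

lemma c\<phi>: "continuous_on UNIV \<phi>"
  using d\<phi> by (meson DERIV_continuous continuous_at_imp_continuous_on)

lemma C1\<phi>: "C1 \<phi>" unfolding C1_def using d\<phi> c\<phi>' by blast

lemma Gz:
  assumes "\<And>t. (w has_real_derivative w' t) (at t)" "continuous_on UNIV w'"
    and "\<And>s. integral {0..pi} (\<lambda>t. \<phi> (t+s) * w t) = 0"
  shows "\<phi> (s+pi) * w pi - \<phi> s * w 0 - integral {0..pi} (\<lambda>t. \<phi> (t+s) * w' t) = 0"
  by (rule G_zero[OF d\<phi> c\<phi>' assms(1,2) _ assms(3)]) simp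

lemma integ: "continuous_on UNIV w \<Longrightarrow> (\<lambda>t. \<phi> (t+s) * w t) integrable_on {a..b}"
  by (auto intro!: integrable_continuous_interval continuous_intros continuous_on_compose2[OF c\<phi>]
       intro: continuous_on_subset)

lemma descent:
  assumes z: "\<And>s. integral {0..pi} (\<lambda>t. \<phi> (t+s) * sin t ^ Suc (Suc j)) = 0"
  shows "integral {0..pi} (\<lambda>t. \<phi> (t+s) * sin t ^ j) = 0"
proof -
  have "\<phi> (s+pi) * sin pi ^ Suc (Suc j) - \<phi> s * sin 0 ^ Suc (Suc j)
     - integral {0..pi} (\<lambda>t. \<phi> (t+s) * (real (Suc (Suc j)) * (sin t ^ Suc j * cos t))) = 0" for s
    by (rule Gz[OF d_sinpow _ z]) (auto intro!: continuous_intros)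
  then have z2: "integral {0..pi} (\<lambda>t. \<phi> (t+s) * (sin t ^ Suc j * cos t)) = 0" for s
    by (simp add: mult.left_commute[of _ "real _"] del: of_nat_Suc)
  have "\<phi> (s+pi) * (sin pi ^ Suc j * cos pi) - \<phi> s * (sin 0 ^ Suc j * cos 0)
     - integral {0..pi} (\<lambda>t. \<phi> (t+s) * (real (Suc j) * sin t ^ j - real (Suc (Suc j)) * sin t ^ Suc (Suc j))) = 0"
  proof (rule Gz[OF _ _ z2])
    fix t
    have e: "real (Suc j) * (sin t ^ j * cos t) * cos t + - sin t * sin t ^ Suc j =
      real (Suc j) * sin t ^ j - real (Suc (Suc j)) * sin t ^ Suc (Suc j)"
    proof -
      have "cos t * cos t + sin t * sin t = 1" by (rule sin_cos_squared_add3)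
      then show ?thesis unfolding power_Suc of_nat_Suc by (rule aux_alg)
    qed
    show "((\<lambda>t. sin t ^ Suc j * cos t) has_real_derivative
       (real (Suc j) * sin t ^ j - real (Suc (Suc j)) * sin t ^ Suc (Suc j))) (at t)"
      by (subst e[symmetric]) (rule DERIV_mult[OF d_sinpow[of j t] DERIV_cos[of t]])
  qed (auto intro!: continuous_intros)
  then have "integral {0..pi} (\<lambda>t. real (Suc j) * (\<phi> (t+s) * sin t ^ j) - real (Suc (Suc j)) * (\<phi> (t+s) * sin t ^ Suc (Suc j))) = 0"
    by (simp add: algebra_simps)
  then have "real (Suc j) * integral {0..pi} (\<lambda>t. \<phi> (t+s) * sin t ^ j) - real (Suc (Suc j)) * integral {0..pi} (\<lambda>t. \<phi> (t+s) * sin t ^ Suc (Suc j)) = 0"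
    by (subst (asm) integral_diff) (auto intro!: integrable_on_cmult_left integ continuous_intros simp del: of_nat_Suc)
  then show ?thesis using z by (simp del: of_nat_Suc)
qed


lemma all_descent: "2*j \<le> k \<Longrightarrow> integral {0..pi} (\<lambda>t. \<phi> (t+s) * sin t ^ (k - 2*j)) = 0"
proof (induction j arbitrary: s)
  case 0 then show ?case using hyp by simp
next
  case (Suc j)
  have e: "k - 2*j = Suc (Suc (k - 2 * Suc j))" using Suc.prems by simp
  have "\<And>s. integral {0..pi} (\<lambda>t. \<phi> (t+s) * sin t ^ Suc (Suc (k - 2 * Suc j))) = 0"
    using Suc.IH[unfolded e] Suc.prems by simp
  then show ?case by (rule descent)
qed

lemma zero_low: "m \<le> k \<Longrightarrow> even (k - m) \<Longrightarrow> integral {0..pi} (\<lambda>t. \<phi> (t+s) * sin t ^ m) = 0"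
proof -
  assume "m \<le> k" "even (k - m)"
  from \<open>even (k - m)\<close> obtain j where j: "k - m = 2*j" by (rule evenE)
  then have "m = k - 2*j" "2*j \<le> k" using \<open>m \<le> k\<close> by auto
  then show ?thesis using all_descent by simp
qed

lemma parity: "\<phi> (s+pi) = (-1)^k * \<phi> s"
proof (cases "even k")
  case True
  have "integral {0..pi} (\<lambda>t. \<phi> (t+s) * sin t ^ 0) = 0" for s
    by (rule zero_low) (use True in auto)
  then have z: "integral {0..pi} (\<lambda>t. \<phi> (t+s) * 1) = 0" for s by simp
  have "\<phi> (s+pi) * 1 - \<phi> s * 1 - integral {0..pi} (\<lambda>t. \<phi> (t+s) * 0) = 0"
    by (rule Gz[OF _ _ z]) (auto intro!: derivative_eq_intros continuous_intros)
  then show ?thesis using True by simp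
next
  case False
  have "integral {0..pi} (\<lambda>t. \<phi> (t+s) * sin t ^ 1) = 0" for s
  proof (rule zero_low)
    show "1 \<le> k" using False odd_pos by fastforce
    then show "even (k - 1)" using False by simp
  qed
  then have z: "integral {0..pi} (\<lambda>t. \<phi> (t+s) * sin t) = 0" for s by simp
  have "\<phi> (s+pi) * sin pi - \<phi> s * sin 0 - integral {0..pi} (\<lambda>t. \<phi> (t+s) * cos t) = 0" for s
    by (rule Gz[OF _ _ z]) (auto intro!: derivative_eq_intros continuous_intros)
  then have zc: "integral {0..pi} (\<lambda>t. \<phi> (t+s) * cos t) = 0" for s by simp
  have "\<phi> (s+pi) * cos pi - \<phi> s * cos 0 - integral {0..pi} (\<lambda>t. \<phi> (t+s) * - sin t) = 0"
    by (rule Gz[OF _ _ zc]) (auto intro!: derivative_eq_intros continuous_intros)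
  moreover have "integral {0..pi} (\<lambda>t. \<phi> (t+s) * - sin t) = 0"
    using z[of s] by (simp add: integral_neg)
  ultimately show ?thesis using False by simp
qed

lemma C1_shift': "C1 f \<Longrightarrow> C1 (\<lambda>t. f (t - c))"
  using C1_shift[of f "-c"] by simp

lemma full_zero:
  assumes "m \<le> k" "even (k - m)"
  shows "integral {0..2*pi} (\<lambda>u. \<phi> u * sin (u - s) ^ m) = 0"
proof -
  let ?h = "\<lambda>u. \<phi> u * sin (u - s) ^ m"
  have C: "C1 ?h" by (intro C1_mult C1\<phi> C1_pow C1_shift' C1_sin)
  have P: "?h (t + 2*pi) = ?h t" for t
  proof -
    have "sin (t + 2*pi - s) = sin (t - s)" using sin_periodic[of "t - s"] by (simp add: algebra_simps)
    then show ?thesis using per[of t] by simp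
  qed
  have "integral {0..2*pi} (\<lambda>t. ?h (t+s)) = integral {0..2*pi} ?h" by (rule shift_period[OF C P])
  moreover have "integral {0..2*pi} (\<lambda>t. ?h (t+s)) = integral {0..2*pi} (\<lambda>t. \<phi> (t+s) * sin t ^ m)" by simp
  moreover have "integral {0..2*pi} (\<lambda>t. \<phi> (t+s) * sin t ^ m) = 0"
  proof -
    have ev: "even (k + m)" using assms by (metis add_diff_cancel_left' dvd_diff_nat even_add le_add_diff_inverse2)
    have "(\<lambda>t. \<phi> (t+pi+s) * sin (t+pi) ^ m) = (\<lambda>t. \<phi> (t+s) * sin t ^ m)"
    proof
      fix t
      have "\<phi> (t+pi+s) = (-1)^k * \<phi> (t+s)" using parity[of "t+s"] by (simp add: algebra_simps)
      moreover have "sin (t+pi) ^ m = (-1)^m * sin t ^ m" by (simp add: power_minus')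
      moreover have "((-1::real)^k) * (-1)^m = 1" using ev by (simp add: power_add[symmetric])
      ultimately show "\<phi> (t+pi+s) * sin (t+pi) ^ m = \<phi> (t+s) * sin t ^ m"
        by (metis (no_types, lifting) mult.assoc mult.left_commute mult_1)
    qed
    moreover have "continuous_on UNIV (\<lambda>t. \<phi> (t+s) * sin t ^ m)"
      by (auto intro!: continuous_intros continuous_on_compose2[OF c\<phi>])
    ultimately show ?thesis using split_period[of "\<lambda>t. \<phi> (t+s) * sin t ^ m"] zero_low[OF assms, of s]
      by (simp add: add.assoc)
  qed
  ultimately show ?thesis by simp
qed

lemma vanish_odd:
  assumes "odd (k + a + b)"
  shows "integral {0..2*pi} (\<lambda>t. cos t ^ a * sin t ^ b * \<phi> t) = 0"
proof -
  have "(\<lambda>t. cos (t+pi) ^ a * sin (t+pi) ^ b * \<phi> (t+pi)) = (\<lambda>t. - (cos t ^ a * sin t ^ b * \<phi> t))"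
  proof
    fix t
    have S: "((-1::real)^a) * (-1)^b * (-1)^k = -1" using assms by (simp add: power_add[symmetric] add.commute add.left_commute)
    have "cos (t+pi) ^ a * sin (t+pi) ^ b * \<phi> (t+pi) = (((-1::real)^a) * (-1)^b * (-1)^k) * (cos t ^ a * sin t ^ b * \<phi> t)"
      using parity[of t] by (simp add: power_minus' algebra_simps)
    then show "cos (t+pi) ^ a * sin (t+pi) ^ b * \<phi> (t+pi) = - (cos t ^ a * sin t ^ b * \<phi> t)"
      using S by simp
  qed
  moreover have "continuous_on UNIV (\<lambda>t. cos t ^ a * sin t ^ b * \<phi> t)"
    by (auto intro!: continuous_intros c\<phi>)
  ultimately show ?thesis using split_period[of "\<lambda>t. cos t ^ a * sin t ^ b * \<phi> t"]
    by (simp add: integral_neg)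
qed


lemma coeff_zero:
  assumes "m \<le> k" "even (k - m)" "j \<le> m"
  shows "integral {0..2*pi} (\<lambda>u. \<phi> u * (sin u ^ j * cos u ^ (m - j))) = 0"
proof -
  define I where "I j = integral {0..2*pi} (\<lambda>u. \<phi> u * (sin u ^ j * cos u ^ (m - j)))" for j
  have Z: "(\<Sum>j\<le>m. (of_nat (m choose j) * I j) * cos s ^ j * (- sin s) ^ (m - j)) = 0" for s
  proof -
    have pw: "\<phi> u * sin (u - s) ^ m = (\<Sum>j\<le>m. (of_nat (m choose j) * cos s ^ j * (- sin s) ^ (m - j)) *
                (\<phi> u * (sin u ^ j * cos u ^ (m - j))))" for u
    proof -
      have e1: "sin (u - s) = sin u * cos s + cos u * (- sin s)" by (simp add: sin_diff)
      have "sin (u - s) ^ m = (\<Sum>j\<le>m. of_nat (m choose j) * (sin u * cos s) ^ j * (cos u * (- sin s)) ^ (m - j))"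
        by (subst e1) (rule binomial_ring)
      then have "\<phi> u * sin (u - s) ^ m = \<phi> u * (\<Sum>j\<le>m. of_nat (m choose j) * (sin u * cos s) ^ j * (cos u * (- sin s)) ^ (m - j))"
        by simp
      also have "\<dots> = (\<Sum>j\<le>m. (of_nat (m choose j) * cos s ^ j * (- sin s) ^ (m - j)) *
                (\<phi> u * (sin u ^ j * cos u ^ (m - j))))"
        unfolding sum_distrib_left by (rule sum.cong[OF refl], simp only: power_mult_distrib, simp add: algebra_simps)
      finally show ?thesis .
    qed
    have "0 = integral {0..2*pi} (\<lambda>u. \<phi> u * sin (u - s) ^ m)" using full_zero[OF assms(1,2)] by simp
    also have "\<dots> = integral {0..2*pi} (\<lambda>u. \<Sum>j\<le>m. (of_nat (m choose j) * cos s ^ j * (- sin s) ^ (m - j)) *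
                (\<phi> u * (sin u ^ j * cos u ^ (m - j))))" by (simp add: pw)
    also have "\<dots> = (\<Sum>j\<le>m. (of_nat (m choose j) * cos s ^ j * (- sin s) ^ (m - j)) * I j)"
      unfolding I_def using continuous_on_subset[OF c\<phi> subset_UNIV]
      by (subst integral_sum) (auto intro!: integrable_continuous_interval continuous_intros)
    finally show ?thesis by (simp add: algebra_simps)
  qed
  have "of_nat (m choose j) * I j = 0"
    by (rule hom_circle_zero[OF Z assms(3)])
  then show ?thesis using assms(3) unfolding I_def by simp
qed

lemma mono_zero:
  assumes "a + b \<le> k"
  shows "integral {0..2*pi} (\<lambda>t. cos t ^ a * sin t ^ b * \<phi> t) = 0"
proof (cases "odd (k + a + b)")
  case True then show ?thesis by (rule vanish_odd)
next
  case False
  then have "even (k - (a + b))" using assms by (metis add.assoc add_diff_cancel_left' dvd_diff_nat even_add le_add_diff_inverse2)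
  from coeff_zero[OF assms this, of b] show ?thesis by (simp add: algebra_simps)
qed

end


inductive V :: "nat \<Rightarrow> (real \<Rightarrow> real) \<Rightarrow> bool" where
  Vmono: "a + b \<le> d \<Longrightarrow> V d (\<lambda>t. cos t ^ a * sin t ^ b)"
| Vzero: "V d (\<lambda>t. 0)"
| Vadd: "V d g \<Longrightarrow> V d h \<Longrightarrow> V d (\<lambda>t. g t + h t)"
| Vscale: "V d g \<Longrightarrow> V d (\<lambda>t. c * g t)"

lemma V_cong: "V d g \<Longrightarrow> (\<And>t. g t = h t) \<Longrightarrow> V d h"
proof -
  assume "V d g" "\<And>t. g t = h t"
  then have "g = h" by auto
  with \<open>V d g\<close> show ?thesis by simp
qed

lemma V_cont: "V d g \<Longrightarrow> continuous_on UNIV g"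
  by (induction rule: V.induct) (auto intro!: continuous_intros)

lemma V_le: "V d g \<Longrightarrow> d \<le> d' \<Longrightarrow> V d' g"
  by (induction rule: V.induct) (auto intro: V.intros)

lemma V_mono_mult: "V d2 h \<Longrightarrow> a + b \<le> d1 \<Longrightarrow> V (d1 + d2) (\<lambda>t. cos t ^ a * sin t ^ b * h t)"
proof (induction rule: V.induct)
  case (Vmono a' b' d)
  have "V (d1 + d) (\<lambda>t. cos t ^ (a + a') * sin t ^ (b + b'))" by (rule V.Vmono) (use Vmono in auto)
  then show ?case by (rule V_cong) (simp add: power_add algebra_simps)
next
  case (Vzero d) then show ?case by (simp add: V.Vzero)
next
  case (Vadd d g h) then show ?case by (auto intro!: V_cong[OF V.Vadd[OF Vadd.IH]] simp: algebra_simps)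
next
  case (Vscale d g c) then show ?case by (auto intro!: V_cong[OF V.Vscale[OF Vscale.IH, of c]] simp: algebra_simps)
qed

lemma V_mult: "V d1 g \<Longrightarrow> V d2 h \<Longrightarrow> V (d1 + d2) (\<lambda>t. g t * h t)"
proof (induction rule: V.induct)
  case (Vmono a b d) then show ?case using V_mono_mult by blast
next
  case (Vzero d) then show ?case by (simp add: V.Vzero)
next
  case (Vadd d g1 g2)
  show ?case by (rule V_cong[OF V.Vadd[OF Vadd.IH(1)[OF Vadd.prems] Vadd.IH(2)[OF Vadd.prems]]]) (simp add: algebra_simps)
next
  case (Vscale d g c)
  show ?case by (rule V_cong[OF V.Vscale[OF Vscale.IH[OF Vscale.prems], of c]]) (simp add: algebra_simps)
qed

lemma V_one: "V d (\<lambda>t. 1)"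
  using Vmono[of 0 0 d] by simp

lemma V_sum: "(\<And>i. i \<in> I \<Longrightarrow> V d (f i)) \<Longrightarrow> V d (\<lambda>t. \<Sum>i\<in>I. f i t)"
proof (cases "finite I")
  case True
  assume "\<And>i. i \<in> I \<Longrightarrow> V d (f i)"
  with True show ?thesis
    by (induction I rule: finite_induct) (auto intro: Vzero V_cong[OF Vadd])
qed (simp add: Vzero)

lemma V_prod: "finite I \<Longrightarrow> (\<And>i. i \<in> I \<Longrightarrow> V (e i) (f i)) \<Longrightarrow> V (\<Sum>i\<in>I. e i) (\<lambda>t. \<Prod>i\<in>I. f i t)"
  by (induction I rule: finite_induct) (auto intro: V_one V_mult)

lemma V_pow: "V d g \<Longrightarrow> V (n * d) (\<lambda>t. g t ^ n)"
  by (induction n) (auto intro: V_one V_mult)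

lemma V_lin: "V 1 (\<lambda>t. cos t * a + sin t * b)"
proof -
  have "V 1 (\<lambda>t. a * (cos t ^ 1 * sin t ^ 0) + b * (cos t ^ 0 * sin t ^ 1))"
    by (intro Vadd Vscale Vmono) auto
  then show ?thesis by (rule V_cong) (simp add: algebra_simps)
qed

context perf begin
lemma V_int: "V d g \<Longrightarrow> d \<le> k \<Longrightarrow> integral {0..2*pi} (\<lambda>t. g t * \<phi> t) = 0"
proof (induction rule: V.induct)
  case (Vmono a b d) then show ?case using mono_zero[of a b] by simp
next
  case (Vzero d) then show ?case by simp
next
  case (Vadd d g h)
  have "(\<lambda>t. g t * \<phi> t) integrable_on {0..2*pi}" "(\<lambda>t. h t * \<phi> t) integrable_on {0..2*pi}"
    using V_cont[OF Vadd.hyps(1)] V_cont[OF Vadd.hyps(2)] c\<phi>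
    by (auto intro!: integrable_continuous_interval continuous_intros intro: continuous_on_subset)
  then show ?case using Vadd by (simp add: distrib_right integral_add)
next
  case (Vscale d g c) then show ?case by (simp add: mult.assoc)
qed
end



lemma smooth_diff: "smooth_fun g \<Longrightarrow> g differentiable (at x)"
  by (erule smooth_fun.cases) auto

lemma smooth_partial: "smooth_fun g \<Longrightarrow> smooth_fun (\<lambda>x. frechet_derivative g (at x) (axis l 1))"
  by (erule smooth_fun.cases) auto

lemma smooth_cont: "smooth_fun g \<Longrightarrow> continuous_on UNIV g"
  by (meson smooth_diff differentiable_at_imp_differentiable_on differentiable_imp_continuous_on)

lemma geod_comp: "geod u v t $ i = cos t * u $ i + sin t * v $ i"
  by (simp add: geod_def)

lemma geod'_comp: "geod' u v t $ i = - sin t * u $ i + cos t * v $ i"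
  by (simp add: geod'_def)

lemma geod_deriv: "((geod u v) has_derivative (\<lambda>h. h *\<^sub>R geod' u v t)) (at t)"
proof -
  have "((\<lambda>t. cos t *\<^sub>R u + sin t *\<^sub>R v) has_vector_derivative (- sin t *\<^sub>R u + cos t *\<^sub>R v)) (at t)"
    by (auto intro!: derivative_eq_intros)
  then show ?thesis unfolding has_vector_derivative_def geod_def[abs_def] geod'_def by simp
qed

lemma cont_geod: "continuous_on UNIV (geod u v)"
  unfolding geod_def[abs_def] by (auto intro!: continuous_intros)

lemma C1_smooth_geod:
  assumes "smooth_fun g"
  shows "C1 (\<lambda>t. g (geod u v t))"
proof -
  define dg where "dg l x = frechet_derivative g (at x) (axis l 1)" for l x
  have cdg: "continuous_on UNIV (dg l)" for l
    unfolding dg_def by (rule smooth_cont[OF smooth_partial[OF assms]])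
  have D: "((\<lambda>t. g (geod u v t)) has_real_derivative (\<Sum>l\<in>UNIV. geod' u v t $ l * dg l (geod u v t))) (at t)" for t
  proof -
    let ?D = "frechet_derivative g (at (geod u v t))"
    have gd: "(g has_derivative ?D) (at (geod u v t))"
      using smooth_diff[OF assms] frechet_derivative_works by blast
    have lin: "linear ?D" using has_derivative_linear[OF gd] .
    have c: "((g \<circ> geod u v) has_derivative (?D \<circ> (\<lambda>h. h *\<^sub>R geod' u v t))) (at t)"
      by (rule diff_chain_at[OF geod_deriv gd])
    have e1: "?D (h *\<^sub>R y) = h * ?D y" for h y using linear_cmul[OF lin] by simp
    have e2: "?D y = (\<Sum>l\<in>UNIV. y $ l * ?D (axis l 1))" for y
    proof -
      have "?D y = ?D (\<Sum>l\<in>UNIV. y $ l *\<^sub>R axis l 1)"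
        using basis_expansion[of y] by (simp add: scalar_mult_eq_scaleR)
      also have "\<dots> = (\<Sum>l\<in>UNIV. y $ l * ?D (axis l 1))"
        by (simp add: linear_sum[OF lin] linear_cmul[OF lin])
      finally show ?thesis .
    qed
    have "(?D \<circ> (\<lambda>h. h *\<^sub>R geod' u v t)) = (\<lambda>h. (\<Sum>l\<in>UNIV. geod' u v t $ l * dg l (geod u v t)) * h)"
      by (auto simp: e1 e2[of "geod' u v t"] dg_def)
    with c show ?thesis unfolding has_field_derivative_def by (simp add: o_def)
  qed
  have "continuous_on UNIV (\<lambda>t. \<Sum>l\<in>UNIV. geod' u v t $ l * dg l (geod u v t))"
    unfolding geod'_comp
    by (auto intro!: continuous_intros continuous_on_compose2[OF cdg cont_geod])
  with D show ?thesis unfolding C1_def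
    by (intro exI[of _ "\<lambda>t. \<Sum>l\<in>UNIV. geod' u v t $ l * dg l (geod u v t)"]) blast
qed



lemma C1_trig_lin: "C1 (\<lambda>t. - sin t * a + cos t * b)"
  unfolding C1_def
  by (rule exI[of _ "\<lambda>t. - cos t * a - sin t * b"]) (auto intro!: derivative_eq_intros continuous_intros)

lemma on_facts:
  assumes "orthonormal2 u v"
  shows "u \<bullet> u = 1" "v \<bullet> v = 1" "u \<bullet> v = 0" "v \<bullet> u = 0"
  using assms unfolding orthonormal2_def by (auto simp: norm_eq_1 inner_commute)

lemma geod_inner:
  assumes "orthonormal2 u v"
  shows "geod u v t \<bullet> geod u v t = 1" "geod' u v t \<bullet> geod' u v t = 1" "geod' u v t \<bullet> geod u v t = 0"
    "geod u v t \<bullet> geod' u v t = 0"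
proof -
  note o = on_facts[OF assms]
  show "geod u v t \<bullet> geod u v t = 1"
    unfolding geod_def by (simp add: inner_add_left inner_add_right o power2_eq_square[symmetric])
  show "geod' u v t \<bullet> geod' u v t = 1"
    unfolding geod'_def by (simp add: inner_add_left inner_add_right inner_diff_left inner_diff_right o power2_eq_square[symmetric])
  show "geod' u v t \<bullet> geod u v t = 0"
    unfolding geod_def geod'_def by (simp add: inner_add_left inner_add_right inner_diff_left inner_diff_right o algebra_simps)
  then show "geod u v t \<bullet> geod' u v t = 0" by (simp add: inner_commute)
qed

lemma orth_shift: "orthonormal2 u v \<Longrightarrow> orthonormal2 (geod u v s) (geod' u v s)"
  unfolding orthonormal2_def[of "geod u v s"] using geod_inner[of u v s] by (simp add: norm_eq_1)

lemma geod_shift: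
  "geod (geod u v s) (geod' u v s) t = geod u v (t + s)"
  "geod' (geod u v s) (geod' u v s) t = geod' u v (t + s)"
  by (simp_all add: vec_eq_iff geod_comp geod'_comp cos_add sin_add algebra_simps)

theorem lemma3p2:
  fixes F :: "real^'n \<Rightarrow> real^'n \<Rightarrow> real^'n \<Rightarrow> real" and k :: nat
  assumes "smooth_sym_cotensor_sphere F"
    and "\<And>u v. orthonormal2 u v \<Longrightarrow>
           integral {0..pi} (\<lambda>t. F (geod u v t) (geod' u v t) (geod' u v t) * (sin t) ^ k) = 0"
  shows "(\<forall>u v. orthonormal2 u v \<longrightarrow> (\<forall>t.
            F (geod u v t) (geod' u v t) (geod' u v t) =
            (-1) ^ k * F (geod u v (t + pi)) (geod' u v (t + pi)) (geod' u v (t + pi))))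
         \<and> (\<forall>u v p. orthonormal2 u v \<longrightarrow> poly_fun_deg k p \<longrightarrow>
            integral {0..2*pi} (\<lambda>t. p (geod u v t) * F (geod u v t) (geod' u v t) (geod' u v t)) = 0)"
proof -
  obtain f :: "'n \<Rightarrow> 'n \<Rightarrow> real^'n \<Rightarrow> real" where f1: "\<And>i j. smooth_fun (f i j)"
    and f3: "\<And>x u v. x \<in> sphere 0 1 \<Longrightarrow> u \<bullet> x = 0 \<Longrightarrow> v \<bullet> x = 0 \<Longrightarrow>
         F x u v = (\<Sum>i\<in>UNIV. \<Sum>j\<in>UNIV. f i j x * u$i * v$j)"
    using assms(1) unfolding smooth_sym_cotensor_sphere_def by blast
  define \<Phi> where "\<Phi> u v t = (\<Sum>i\<in>UNIV. \<Sum>j\<in>UNIV. f i j (geod u v t) * geod' u v t $ i * geod' u v t $ j)"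
    for u v t
  have F\<Phi>: "F (geod u v t) (geod' u v t) (geod' u v t) = \<Phi> u v t" if "orthonormal2 u v" for u v t
  proof -
    have "geod u v t \<in> sphere 0 1" using geod_inner(1)[OF that] by (simp add: norm_eq_1)
    then show ?thesis unfolding \<Phi>_def by (rule f3) (use geod_inner(3)[OF that] in auto)
  qed
  have C: "C1 (\<Phi> u v)" for u v
    unfolding \<Phi>_def[abs_def] geod'_comp
    by (intro C1_sum C1_mult C1_smooth_geod f1 C1_trig_lin)
  have P: "\<Phi> u v (t + 2*pi) = \<Phi> u v t" for u v t
  proof -
    have "geod u v (t + 2*pi) = geod u v t" "geod' u v (t + 2*pi) = geod' u v t"
      by (simp_all add: geod_def geod'_def)
    then show ?thesis unfolding \<Phi>_def by simp
  qed
  have H: "integral {0..pi} (\<lambda>t. \<Phi> u v (t+s) * sin t ^ k) = 0" if "orthonormal2 u v" for u v s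
  proof -
    have "integral {0..pi} (\<lambda>t. F (geod (geod u v s) (geod' u v s) t) (geod' (geod u v s) (geod' u v s) t)
            (geod' (geod u v s) (geod' u v s) t) * (sin t) ^ k) = 0"
      by (rule assms(2)[OF orth_shift[OF that]])
    then show ?thesis unfolding geod_shift F\<Phi>[OF that] .
  qed
  have main: "(\<forall>t. F (geod u v t) (geod' u v t) (geod' u v t) =
            (-1) ^ k * F (geod u v (t + pi)) (geod' u v (t + pi)) (geod' u v (t + pi)))
         \<and> (\<forall>p. poly_fun_deg k p \<longrightarrow>
            integral {0..2*pi} (\<lambda>t. p (geod u v t) * F (geod u v t) (geod' u v t) (geod' u v t)) = 0)"
    if uv: "orthonormal2 u v" for u v
  proof -
    obtain \<phi>' where d: "\<And>t. (\<Phi> u v has_real_derivative \<phi>' t) (at t)" "continuous_on UNIV \<phi>'"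
      using C[of u v] unfolding C1_def by blast
    interpret perf "\<Phi> u v" \<phi>' k
      by unfold_locales (use d P H[OF uv] in auto)
    have i: "F (geod u v t) (geod' u v t) (geod' u v t) =
            (-1) ^ k * F (geod u v (t + pi)) (geod' u v (t + pi)) (geod' u v (t + pi))" for t
    proof -
      have "((-1::real) ^ k) * (-1) ^ k = 1" by (simp add: power_add[symmetric])
      then show ?thesis unfolding F\<Phi>[OF uv] parity[of t] by (simp add: mult.assoc[symmetric])
    qed
    have ii: "integral {0..2*pi} (\<lambda>t. p (geod u v t) * F (geod u v t) (geod' u v t) (geod' u v t)) = 0"
      if pp: "poly_fun_deg k p" for p
    proof -
      obtain c where c: "p = (\<lambda>x. \<Sum>\<alpha>\<in>{\<alpha> :: 'n \<Rightarrow> nat. sum \<alpha> UNIV \<le> k}. c \<alpha> * (\<Prod>i\<in>UNIV. (x$i) ^ \<alpha> i))"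
        using pp unfolding poly_fun_deg_def by blast
      have "V k (\<lambda>t. p (geod u v t))"
        unfolding c geod_comp
      proof (rule V_sum)
        fix \<alpha> :: "'n \<Rightarrow> nat" assume "\<alpha> \<in> {\<alpha>. sum \<alpha> UNIV \<le> k}"
        then have le: "sum \<alpha> UNIV \<le> k" by simp
        have "V (\<Sum>i\<in>UNIV. \<alpha> i * 1) (\<lambda>t. \<Prod>i\<in>UNIV. (cos t * u $ i + sin t * v $ i) ^ \<alpha> i)"
          by (intro V_prod V_pow V_lin) simp
        then have "V k (\<lambda>t. \<Prod>i\<in>UNIV. (cos t * u $ i + sin t * v $ i) ^ \<alpha> i)"
          using le by (auto intro: V_le)
        then show "V k (\<lambda>t. c \<alpha> * (\<Prod>i\<in>UNIV. (cos t * u $ i + sin t * v $ i) ^ \<alpha> i))"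
          by (rule Vscale)
      qed
      from V_int[OF this] show ?thesis unfolding F\<Phi>[OF uv] by simp
    qed
    show ?thesis using i ii by blast
  qed
  show ?thesis using main by blast
qed


end
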